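(* Let $a<b$, $c<d$, $C\in\mathbb{R}\setminus\{0\}$, $\Delta=\max\{b-a,d-c\}$, and let $N\ge2$ be an integer. Let $(p,q)$ be a pair of real sequences with $p_0=q_0$ and with $\|(p,q)\|_\gamma<\infty$ for some integer $\gamma\ge1$, where $$\|(p,q)\|_\gamma=\max\Big\{\sup_{n\ge0}\Big|\frac{(n!)^2p_n}{(\gamma|C|\Delta)^n}\Big|,\ \sup_{n\ge0}\Big|\frac{(n!)^2q_n}{(\gamma|C|\Delta)^n}\Big|\Big\}.$$ Let $k$ be the solution of the Goursat problem $\partial^2k/\partial s\partial t=Ck$ on $[a,b]\times[c,d]$ with $k(s,c)=\sum_{n\ge0}p_n(s-a)^n$ and $k(a,t)=\sum_{n\ge0}q_n(t-c)^n$. For $0\le n\le N$ set $$\hat p_n=\sum_{k=0}^{n}p_k\frac{(C(d-c))^{n-k}k!}{(n-k)!\,n!}+\sum_{k=1}^{N}q_k\frac{C^n(d-c)^{n+k}k!}{(n+k)!\,n!},\qquad \hat q_n=\sum_{k=0}^{n}q_k\frac{(C(b-a))^{n-k}k!}{(n-k)!\,n!}+\sum_{k=1}^{N}p_k\frac{C^n(b-a)^{n+k}k!}{(n+k)!\,n!},$$ and $\hat k^N(b,d)=\frac12\sum_{n=0}^N\big(\hat p_n(b-a)^n+\hat q_n(d-c)^n\big)$. Then $$|k(b,d)-\hat k^N(b,d)|\le 2\|(p,q)\|_\gamma\,I_0(2\sqrt{\gamma|C|}\Delta)\,I_0(2\sqrt{(\gamma+1)|C|}\Delta)\,\frac{(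|C|\Delta^2)^{N+1}(\gamma+1)^{N+1}}{[(N+1)!]^2}.$$
   Context: The solution of the Goursat problem is the continuous function $k$ on $[a,b]\times[c,d]$ with $k(s,t)=k(s,c)+k(a,t)-k(a,c)+C\int_a^s\int_c^t k(r,w)\,dw\,dr$. $I_0$ is the zero-order modified Bessel function of the first kind, $I_0(2z)=\sum_{k\ge0}z^{2k}/(k!)^2$. The quantities $\hat p,\hat q$ are the order-$N$ truncations of the boundary coefficient map applied to the order-$N$ truncated input coefficients. *)

theory Defs
  imports "HOL-Analysis.Analysis"
begin

definition bessel_I0 :: "real \<Rightarrow> real" where
  "bessel_I0 x = (\<Sum>j. (x / 2) ^ (2 * j) / (fact j) ^ 2)"

definition gamma_norm :: "(nat \<Rightarrow> real) \<Rightarrow> (nat \<Rightarrow> real) \<Rightarrow> nat \<Rightarrow> real \<Rightarrow> real \<Rightarrow> real" where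
  "gamma_norm p q \<gamma> C \<Delta> =
     max (SUP n. \<bar>(fact n) ^ 2 * p n / (real \<gamma> * \<bar>C\<bar> * \<Delta>) ^ n\<bar>)
         (SUP n. \<bar>(fact n) ^ 2 * q n / (real \<gamma> * \<bar>C\<bar> * \<Delta>) ^ n\<bar>)"

definition goursat_solution ::
  "real \<Rightarrow> real \<Rightarrow> real \<Rightarrow> real \<Rightarrow> real \<Rightarrow> (real \<Rightarrow> real \<Rightarrow> real) \<Rightarrow> bool" where
  "goursat_solution a b c d C k \<longleftrightarrow>
     continuous_on ({a..b} \<times> {c..d}) (\<lambda>(s, t). k s t) \<and>
     (\<forall>s\<in>{a..b}. \<forall>t\<in>{c..d}.
        k s t = k s c + k a t - k a c
                + C * integral {a..s} (\<lambda>r. integral {c..t} (\<lambda>w. k r w)))"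

definition p_hat :: "(nat \<Rightarrow> real) \<Rightarrow> (nat \<Rightarrow> real) \<Rightarrow> real \<Rightarrow> real \<Rightarrow> real \<Rightarrow> nat \<Rightarrow> nat \<Rightarrow> real" where
  "p_hat p q C a b N n =
     (\<Sum>j=0..n. p j * (C * (b - a)) ^ (n - j) * fact j / (fact (n - j) * fact n))
     + (\<Sum>j=1..N. q j * C ^ n * (b - a) ^ (n + j) * fact j / (fact (n + j) * fact n))"

text \<open>With this definition, \<open>p\<hat>_n = p_hat p q C c d N n\<close> (uses d - c) and
  \<open>q\<hat>_n = p_hat q p C a b N n\<close> (uses b - a).\<close>

definition k_hat :: "(nat \<Rightarrow> real) \<Rightarrow> (nat \<Rightarrow> real) \<Rightarrow> real \<Rightarrow> real \<Rightarrow> real \<Rightarrow> real \<Rightarrow> real \<Rightarrow> nat \<Rightarrow> real" where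
  "k_hat p q C a b c d N =
     (1/2) * (\<Sum>n=0..N. p_hat p q C c d N n * (b - a) ^ n + p_hat q p C a b N n * (d - c) ^ n)"

end

theory Submission
  imports Defs
begin

definition cf :: "(nat\<Rightarrow>real) \<Rightarrow> (nat\<Rightarrow>real) \<Rightarrow> real \<Rightarrow> nat \<Rightarrow> nat \<Rightarrow> real" where
 "cf p q C m n = (if n \<le> m then C^n * p (m-n) * fact (m-n) / (fact m * fact n)
                  else C^m * q (n-m) * fact (n-m) / (fact n * fact m))"

definition shell :: "(nat \<Rightarrow> nat \<Rightarrow> real) \<Rightarrow> nat \<Rightarrow> real" where
 "shell f L = (\<Sum>i\<le>L. f L i) + (\<Sum>j<L. f j L)"

definition tm :: "(nat\<Rightarrow>real) \<Rightarrow> (nat\<Rightarrow>real) \<Rightarrow> real \<Rightarrow> real \<Rightarrow> real \<Rightarrow> nat \<Rightarrow> nat \<Rightarrow> real" where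
 "tm p q C x y m n = cf p q C m n * x^m * y^n"

lemma fact_add_ge: "fact K * fact n \<le> (fact (K + n) :: real)"
proof -
  have "fact K * fact n * real ((K+n) choose K) = fact (K+n)"
    using binomial_fact[of K "K+n", where 'a=real] by (simp add: field_simps)
  moreover have "real ((K+n) choose K) \<ge> 1" by (simp add: Suc_leI)
  moreover have "fact K * fact n \<ge> (0::real)" by simp
  ultimately show ?thesis by (metis mult_le_cancel_left1 order_less_le not_le mult.commute
     order_trans mult_right_mono)
qed

lemma tb:
  fixes P :: "nat \<Rightarrow> real"
  assumes hP: "\<bar>P k\<bar> \<le> M * (G*\<bar>C\<bar>*\<Delta>)^k / (fact k)^2"
    and x: "0 \<le> x" "x \<le> \<Delta>" and y: "0 \<le> y" "y \<le> \<Delta>" and G: "G \<ge> 0" and M: "M \<ge> 0"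
  shows "\<bar>C^i * P k * fact k / (fact (i+k) * fact i) * x^(i+k) * y^i\<bar>
     \<le> M * (\<bar>C\<bar>*\<Delta>^2)^(i+k) * G^k / (fact (i+k) * fact k * fact i)"
proof -
  have "\<bar>C^i * P k * fact k / (fact (i+k) * fact i) * x^(i+k) * y^i\<bar>
      = (\<bar>C\<bar>^i * (fact k / (fact (i+k) * fact i))) * \<bar>P k\<bar> * (x^(i+k) * y^i)"
    using x y by (simp add: abs_mult power_abs)
  also have "\<dots> \<le> (\<bar>C\<bar>^i * (fact k / (fact (i+k) * fact i))) * (M * (G*\<bar>C\<bar>*\<Delta>)^k / (fact k)^2) * (\<Delta>^(i+k) * \<Delta>^i)"
    apply (intro mult_mono mult_left_mono hP power_mono)
    using x y G M by (auto intro!: mult_nonneg_nonneg divide_nonneg_nonneg)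
  also have "\<dots> = M * (\<bar>C\<bar>*\<Delta>^2)^(i+k) * G^k / (fact (i+k) * fact k * fact i)"
    by (simp add: power_add power_mult_distrib power2_eq_square field_simps)
  finally show ?thesis .
qed

lemma abs_suminf_le:
  fixes f g :: "nat \<Rightarrow> real"
  assumes g: "summable g" and fg: "\<And>n. \<bar>f n\<bar> \<le> g n"
  shows "summable f" "\<bar>suminf f\<bar> \<le> suminf g"
proof -
  show sf: "summable f" by (rule summable_comparison_test'[OF g, of 0]) (simp add: fg)
  have a: "f n \<le> g n" for n using fg[of n] by linarith
  have b: "- f n \<le> g n" for n using fg[of n] by linarith
  have "suminf f \<le> suminf g" by (rule suminf_le[OF a sf g])
  moreover have "suminf (\<lambda>n. - f n) \<le> suminf g" by (rule suminf_le[OF b summable_minus[OF sf] g])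
  ultimately show "\<bar>suminf f\<bar> \<le> suminf g" using suminf_minus[OF sf] by linarith
qed

lemma shell_abs_le: "\<bar>shell f L\<bar> \<le> shell (\<lambda>m n. \<bar>f m n\<bar>) L"
  unfolding shell_def
  by (rule order_trans[OF abs_triangle_ineq add_mono[OF sum_abs sum_abs]])

lemma sq_shell: "(\<Sum>m<L. \<Sum>n<L. f m n) = (\<Sum>K<L. shell f K)"
proof (induction L)
  case 0 then show ?case by simp
next
  case (Suc L)
  have "(\<Sum>m<Suc L. \<Sum>n<Suc L. f m n) = (\<Sum>m<L. \<Sum>n<L. f m n) + (\<Sum>m<L. f m L) + (\<Sum>n<Suc L. f L n)"
    by (simp add: sum.distrib)
  also have "\<dots> = (\<Sum>K<L. shell f K) + shell f L" using Suc
    by (simp add: shell_def lessThan_Suc_atMost[symmetric])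
  also have "\<dots> = (\<Sum>K<Suc L. shell f K)" by simp
  finally show ?case .
qed
locale gs =
  fixes p q :: "nat \<Rightarrow> real" and C M G \<Delta> :: real
  assumes hp: "\<And>n. \<bar>p n\<bar> \<le> M * (G*\<bar>C\<bar>*\<Delta>)^n / (fact n)^2"
    and hq: "\<And>n. \<bar>q n\<bar> \<le> M * (G*\<bar>C\<bar>*\<Delta>)^n / (fact n)^2"
    and G: "G \<ge> 0" and D: "\<Delta> \<ge> 0" and M: "M \<ge> 0" and p0: "p 0 = q 0"
begin

definition X where "X = (G+1)*\<bar>C\<bar>*\<Delta>^2"
definition tau where "tau L = X^L / (fact L)^2"

lemma X_nonneg: "X \<ge> 0" unfolding X_def using G by simp

lemma tau_nonneg: "tau L \<ge> 0" unfolding tau_def using X_nonneg by simp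

lemma beta_sum: "(\<Sum>i\<le>L. M*(\<bar>C\<bar>*\<Delta>^2)^L * G^(L-i)/(fact L * fact (L-i) * fact i)) = M * tau L"
proof -
  have "(\<Sum>i\<le>L. M*(\<bar>C\<bar>*\<Delta>^2)^L * G^(L-i)/(fact L * fact (L-i) * fact i))
     = (\<Sum>i\<le>L. (M*(\<bar>C\<bar>*\<Delta>^2)^L / (fact L)^2) * (of_nat (L choose i) * 1^i * G^(L-i)))"
  proof (rule sum.cong[OF refl])
    fix i assume "i \<in> {..L}"
    then have "real (L choose i) = fact L / (fact i * fact (L-i))" by (simp add: binomial_fact)
    then show "M*(\<bar>C\<bar>*\<Delta>^2)^L * G^(L-i)/(fact L * fact (L-i) * fact i)
       = (M*(\<bar>C\<bar>*\<Delta>^2)^L / (fact L)^2) * (of_nat (L choose i) * 1^i * G^(L-i))"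
      by (simp add: power2_eq_square field_simps)
  qed
  also have "\<dots> = (M*(\<bar>C\<bar>*\<Delta>^2)^L / (fact L)^2) * (\<Sum>i\<le>L. of_nat (L choose i) * 1^i * G^(L-i))"
    by (rule sum_distrib_left[symmetric])
  also have "\<dots> = (M*(\<bar>C\<bar>*\<Delta>^2)^L / (fact L)^2) * (1 + G)^L"
    by (simp only: binomial_ring)
  also have "\<dots> = M * tau L"
  proof -
    have "(G+1)*\<bar>C\<bar>*\<Delta>^2 = (\<bar>C\<bar>*\<Delta>^2)*(1+G)" by (simp add: algebra_simps)
    then have "X^L = (\<bar>C\<bar>*\<Delta>^2)^L * (1+G)^L" unfolding X_def by (simp only: power_mult_distrib)
    then show ?thesis unfolding tau_def by simp
  qed
  finally show ?thesis .
qed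

lemma beta_nonneg: "0 \<le> M*(\<bar>C\<bar>*\<Delta>^2)^L * G^(L-i)/(fact L * fact (L-i) * fact i)"
  using M G by simp

lemma shell_bound:
  assumes x: "0 \<le> x" "x \<le> \<Delta>" and y: "0 \<le> y" "y \<le> \<Delta>"
  shows "shell (\<lambda>m n. \<bar>tm p q C x y m n\<bar>) L \<le> 2 * M * tau L"
proof -
  let ?b = "\<lambda>i. M*(\<bar>C\<bar>*\<Delta>^2)^L * G^(L-i)/(fact L * fact (L-i) * fact i)"
  have 1: "\<bar>tm p q C x y L i\<bar> \<le> ?b i" if "i \<le> L" for i
  proof -
    have e: "L = i + (L - i)" using that by simp
    have "tm p q C x y L i = C^i * p (L-i) * fact (L-i) / (fact (i + (L-i)) * fact i) * x^(i+(L-i)) * y^i"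
      using that unfolding tm_def cf_def by (simp flip: e)
    also have "\<bar>\<dots>\<bar> \<le> M * (\<bar>C\<bar>*\<Delta>^2)^(i+(L-i)) * G^(L-i) / (fact (i+(L-i)) * fact (L-i) * fact i)"
      by (rule tb[OF hp x y G M])
    finally show ?thesis by (simp flip: e)
  qed
  have 2: "\<bar>tm p q C x y j L\<bar> \<le> ?b j" if "j < L" for j
  proof -
    have e: "L = j + (L - j)" using that by simp
    have "tm p q C x y j L = C^j * q (L-j) * fact (L-j) / (fact (j + (L-j)) * fact j) * y^(j+(L-j)) * x^j"
      using that unfolding tm_def cf_def by (simp flip: e add: mult_ac)
    also have "\<bar>\<dots>\<bar> \<le> M * (\<bar>C\<bar>*\<Delta>^2)^(j+(L-j)) * G^(L-j) / (fact (j+(L-j)) * fact (L-j) * fact j)"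
      by (rule tb[OF hq y x G M])
    finally show ?thesis by (simp flip: e)
  qed
  have "(\<Sum>i\<le>L. \<bar>tm p q C x y L i\<bar>) \<le> (\<Sum>i\<le>L. ?b i)" by (intro sum_mono 1) auto
  moreover have "(\<Sum>j<L. \<bar>tm p q C x y j L\<bar>) \<le> (\<Sum>j<L. ?b j)" by (intro sum_mono 2) auto
  moreover have "(\<Sum>j<L. ?b j) \<le> (\<Sum>j\<le>L. ?b j)"
    apply (rule sum_mono2) apply simp apply force apply (rule beta_nonneg) done
  ultimately show ?thesis unfolding shell_def using beta_sum[of L] by linarith
qed

lemma summable_tau: "summable tau"
proof (rule summable_comparison_test'[OF summable_exp[of X], of 0])
  fix n :: nat
  have "fact n * fact n \<ge> (fact n :: real)" by simp
  then have "X^n / (fact n)^2 \<le> X^n / fact n"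
    using X_nonneg by (intro divide_left_mono) (auto simp: power2_eq_square)
  then show "norm (tau n) \<le> inverse (fact n) * X^n"
    using tau_nonneg by (simp add: tau_def field_simps)
qed

end

lemma shell_add: "shell (\<lambda>m n. f m n + g m n) K = shell f K + shell g K"
  unfolding shell_def by (simp add: sum.distrib)

context gs begin

definition UU where "UU x y = (\<Sum>K. shell (tm p q C x y) K)"
definition uL where "uL L x y = (\<Sum>m<L. \<Sum>n<L. tm p q C x y m n)"
definition eps where "eps L = (\<Sum>K. 2*M*tau (K+L))"

lemma summable_2tau: "summable (\<lambda>K. 2*M*tau K)"
  using summable_tau by (rule summable_mult)

lemma summable_2tau_shift: "summable (\<lambda>K. 2*M*tau (K+L))"
  using summable_2tau by (rule summable_ignore_initial_segment)

lemma shell_tm_le: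
  assumes "0 \<le> x" "x \<le> \<Delta>" "0 \<le> y" "y \<le> \<Delta>"
  shows "\<bar>shell (tm p q C x y) K\<bar> \<le> 2*M*tau K"
  using shell_abs_le[of "tm p q C x y" K] shell_bound[OF assms, of K] by linarith

lemma summable_shell:
  assumes "0 \<le> x" "x \<le> \<Delta>" "0 \<le> y" "y \<le> \<Delta>"
  shows "summable (\<lambda>K. shell (tm p q C x y) K)"
  using abs_suminf_le(1)[OF summable_2tau shell_tm_le[OF assms]] .

lemma UU_bound:
  assumes "0 \<le> x" "x \<le> \<Delta>" "0 \<le> y" "y \<le> \<Delta>"
  shows "\<bar>UU x y\<bar> \<le> (\<Sum>K. 2*M*tau K)"
  unfolding UU_def using abs_suminf_le(2)[OF summable_2tau shell_tm_le[OF assms]] .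

lemma uL_approx:
  assumes "0 \<le> x" "x \<le> \<Delta>" "0 \<le> y" "y \<le> \<Delta>"
  shows "\<bar>UU x y - uL L x y\<bar> \<le> eps L"
proof -
  have "UU x y - uL L x y = (\<Sum>K. shell (tm p q C x y) (K + L))"
    unfolding UU_def uL_def sq_shell
    using suminf_minus_initial_segment[OF summable_shell[OF assms], of L] by simp
  also have "\<bar>\<dots>\<bar> \<le> eps L" unfolding eps_def
    by (rule abs_suminf_le(2)[OF summable_2tau_shift shell_tm_le[OF assms]])
  finally show ?thesis .
qed

lemma eps_lim: "eps \<longlonglongrightarrow> 0"
proof -
  have e: "eps L = (\<Sum>K. 2*M*tau K) - (\<Sum>K<L. 2*M*tau K)" for L
    unfolding eps_def by (rule suminf_minus_initial_segment[OF summable_2tau])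
  have "(\<lambda>L. (\<Sum>K. 2*M*tau K) - (\<Sum>K<L. 2*M*tau K)) \<longlonglongrightarrow> (\<Sum>K. 2*M*tau K) - (\<Sum>K. 2*M*tau K)"
    by (intro tendsto_diff tendsto_const summable_LIMSEQ[OF summable_2tau])
  then show ?thesis unfolding e by simp
qed

lemma tail:
  assumes xy: "0 \<le> x" "x \<le> \<Delta>" "0 \<le> y" "y \<le> \<Delta>"
    and SR: "\<And>m n. S m n \<Longrightarrow> m < R \<and> n < R"
    and SN: "\<And>m n. m \<le> N \<Longrightarrow> n \<le> N \<Longrightarrow> S m n"
  shows "\<bar>UU x y - (\<Sum>m<R. \<Sum>n<R. if S m n then tm p q C x y m n else 0)\<bar>
     \<le> 2*M*(\<Sum>K. tau (K + Suc N))"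
proof -
  let ?f = "tm p q C x y"
  let ?fS = "\<lambda>m n. if S m n then ?f m n else 0"
  let ?fN = "\<lambda>m n. if S m n then 0 else ?f m n"
  have fin: "(\<Sum>m<R. \<Sum>n<R. ?fS m n) = (\<Sum>K. shell ?fS K)"
    unfolding sq_shell
  proof (rule suminf_finite[symmetric])
    fix K assume "K \<notin> {..<R}"
    then have "\<And>n. \<not> S K n" "\<And>j. \<not> S j K" using SR by force+
    then show "shell ?fS K = 0" unfolding shell_def by simp
  qed simp
  have sS: "summable (\<lambda>K. shell ?fS K)"
  proof (rule summable_finite[of "{..<R}"])
    fix K assume "K \<notin> {..<R}"
    then have "\<And>n. \<not> S K n" "\<And>j. \<not> S j K" using SR by force+
    then show "shell ?fS K = 0" unfolding shell_def by simp
  qed simp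
  have split: "shell ?f K = shell ?fS K + shell ?fN K" for K
  proof -
    have "?f = (\<lambda>m n. ?fS m n + ?fN m n)" by (auto simp: fun_eq_iff)
    then show ?thesis by (metis (no_types) shell_add)
  qed
  have sN: "summable (\<lambda>K. shell ?fN K)"
    using summable_diff[OF summable_shell[OF xy] sS] split by simp
  have "UU x y - (\<Sum>m<R. \<Sum>n<R. ?fS m n) = (\<Sum>K. shell ?fN K)"
    unfolding fin UU_def split using suminf_add[OF sS sN] by simp
  also have "\<dots> = (\<Sum>K. shell ?fN (K + Suc N))"
  proof -
    have "(\<Sum>K<Suc N. shell ?fN K) = 0"
      by (rule sum.neutral) (auto simp: shell_def SN intro!: sum.neutral)
    then show ?thesis using suminf_split_initial_segment[OF sN, of "Suc N"] by simp
  qed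
  also have "\<bar>\<dots>\<bar> \<le> (\<Sum>K. 2*M*tau (K + Suc N))"
  proof (rule abs_suminf_le(2)[OF summable_2tau_shift])
    fix K
    have "\<bar>shell ?fN (K + Suc N)\<bar> \<le> shell (\<lambda>m n. \<bar>?fN m n\<bar>) (K + Suc N)" by (rule shell_abs_le)
    also have "\<dots> \<le> shell (\<lambda>m n. \<bar>?f m n\<bar>) (K + Suc N)"
      unfolding shell_def by (intro add_mono sum_mono) auto
    also have "\<dots> \<le> 2*M*tau (K + Suc N)" by (rule shell_bound[OF xy])
    finally show "\<bar>shell ?fN (K + Suc N)\<bar> \<le> 2*M*tau (K + Suc N)" .
  qed
  also have "\<dots> = 2*M*(\<Sum>K. tau (K + Suc N))"
    by (rule suminf_mult[OF summable_ignore_initial_segment[OF summable_tau]])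
  finally show ?thesis .
qed

end

lemma mono_int:
  fixes a s :: real
  assumes "a \<le> s"
  shows "((\<lambda>r. (r-a)^m) has_integral (s-a)^(Suc m)/Suc m) {a..s}"
proof -
  have "((\<lambda>r. (r-a)^m) has_integral ((\<lambda>r. (r-a)^(Suc m)/Suc m) s - (\<lambda>r. (r-a)^(Suc m)/Suc m) a)) {a..s}"
  proof (rule fundamental_theorem_of_calculus[OF assms])
    fix x :: real
    have "((\<lambda>r. (r-a)^(Suc m)/Suc m) has_real_derivative (Suc m * (x-a)^m * 1)/Suc m) (at x within {a..s})"
      by (intro derivative_eq_intros) auto
    then show "((\<lambda>r. (r-a)^(Suc m)/Suc m) has_vector_derivative (x-a)^m) (at x within {a..s})"
      by (simp add: has_real_derivative_iff_has_vector_derivative[symmetric] del: of_nat_Suc)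
  qed
  then show ?thesis by simp
qed

lemma unif_int:
  fixes f :: "real \<Rightarrow> real" and g :: "nat \<Rightarrow> real \<Rightarrow> real"
  assumes ab: "a \<le> b" and fg: "\<And>n x. x \<in> {a..b} \<Longrightarrow> \<bar>f x - g n x\<bar> \<le> e n"
    and e: "e \<longlonglongrightarrow> 0" and gi: "\<And>n. g n integrable_on {a..b}"
  shows "f integrable_on {a..b}"
    and "\<And>n. \<bar>integral {a..b} f - integral {a..b} (g n)\<bar> \<le> e n * (b-a)"
    and "(\<lambda>n. integral {a..b} (g n)) \<longlonglongrightarrow> integral {a..b} f"
proof -
  show fi: "f integrable_on {a..b}"
    unfolding cbox_interval[symmetric]
  proof (rule integrable_uniform_limit)
    fix e' :: real assume "e' > 0"
    then have "eventually (\<lambda>n. e n < e') sequentially" using e by (rule order_tendstoD(2)[rotated])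
    then obtain n where n: "e n < e'" by (metis eventually_sequentially order_refl)
    show "\<exists>h. (\<forall>x\<in>cbox a b. norm (f x - h x) \<le> e') \<and> h integrable_on cbox a b"
    proof (intro exI[of _ "g n"] conjI ballI)
      fix x assume "x \<in> cbox a b"
      then show "norm (f x - g n x) \<le> e'" using fg[of x n] n by (simp add: cbox_interval)
    qed (use gi in \<open>simp add: cbox_interval\<close>)
  qed
  show b: "\<bar>integral {a..b} f - integral {a..b} (g n)\<bar> \<le> e n * (b-a)" for n
  proof -
    have "integral {a..b} f - integral {a..b} (g n) = integral {a..b} (\<lambda>x. f x - g n x)"
      by (rule integral_diff[OF fi gi, symmetric])
    also have "\<bar>\<dots>\<bar> \<le> integral {a..b} (\<lambda>x. e n)"
      using integral_norm_bound_integral[of "\<lambda>x. f x - g n x" "{a..b}" "\<lambda>x. e n"] fi gi fg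
        integrable_diff[OF fi gi[of n]] integrable_const_ivl[of "e n" a b] by auto
    also have "\<dots> = e n * (b-a)" using ab by simp
    finally show ?thesis .
  qed
  have "(\<lambda>n. integral {a..b} (g n) - integral {a..b} f) \<longlonglongrightarrow> 0"
  proof (rule Lim_null_comparison)
    show "\<forall>\<^sub>F n in sequentially. norm (integral {a..b} (g n) - integral {a..b} f) \<le> e n * (b-a)"
      using b by (auto simp: abs_minus_commute)
    show "(\<lambda>n. e n * (b-a)) \<longlonglongrightarrow> 0" using e by (intro tendsto_mult_left_zero)
  qed
  then show "(\<lambda>n. integral {a..b} (g n)) \<longlonglongrightarrow> integral {a..b} f" by (rule LIM_zero_cancel)
qed

lemma cf_rec: "cf p q C (Suc m) (Suc n) = C * cf p q C m n / (Suc m * Suc n)"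
  unfolding cf_def by (auto simp: field_simps)

lemma sq_split: "(\<Sum>m<Suc L. \<Sum>n<Suc L. f m n) = f 0 0 + (\<Sum>n<L. f 0 (Suc n)) + (\<Sum>m<L. f (Suc m) 0)
   + (\<Sum>m<L. \<Sum>n<L. f (Suc m) (Suc n))"
  unfolding sum.lessThan_Suc_shift by (simp add: sum.distrib add.assoc del: sum.lessThan_Suc)

context gs begin

definition W where "W L x y = (\<Sum>m<L. \<Sum>n<L. cf p q C m n * (x^Suc m/Suc m) * (y^Suc n/Suc n))"
definition HH where "HH L x y = (\<Sum>m<L. \<Sum>n<L. cf p q C m n * x^m * (y^Suc n/Suc n))"

lemma inner_int:
  assumes "c \<le> t"
  shows "((\<lambda>w. uL L x (w-c)) has_integral HH L x (t-c)) {c..t}"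
  unfolding uL_def HH_def tm_def
  by (intro has_integral_sum finite_lessThan has_integral_mult_right mono_int assms)

lemma outer_int:
  assumes "a \<le> s"
  shows "((\<lambda>r. HH L (r-a) y) has_integral W L (s-a) y) {a..s}"
  unfolding W_def HH_def
  by (intro has_integral_sum finite_lessThan has_integral_mult_left has_integral_mult_right mono_int assms)

lemma uL_nonneg_dom: True by simp

lemma V_UU:
  assumes s: "a \<le> s" "s - a \<le> \<Delta>" and t: "c \<le> t" "t - c \<le> \<Delta>"
  shows "\<And>r. r \<in> {a..s} \<Longrightarrow> (\<lambda>w. UU (r-a) (w-c)) integrable_on {c..t}"
    and "(\<lambda>r. integral {c..t} (\<lambda>w. UU (r-a) (w-c))) integrable_on {a..s}"
    and "(\<lambda>L. W L (s-a) (t-c)) \<longlonglongrightarrow> integral {a..s} (\<lambda>r. integral {c..t} (\<lambda>w. UU (r-a) (w-c)))"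
proof -
  have app: "\<bar>UU (r-a) (w-c) - uL L (r-a) (w-c)\<bar> \<le> eps L" if "r \<in> {a..s}" "w \<in> {c..t}" for r w L
    using that s t by (intro uL_approx) auto
  have gi: "(\<lambda>w. uL L (r-a) (w-c)) integrable_on {c..t}" for r L
    using inner_int[OF t(1)] by blast
  note U = unif_int[OF t(1) app eps_lim gi]
  show "\<And>r. r \<in> {a..s} \<Longrightarrow> (\<lambda>w. UU (r-a) (w-c)) integrable_on {c..t}" using U(1) by blast
  have i2: "\<bar>integral {c..t} (\<lambda>w. UU (r-a) (w-c)) - HH L (r-a) (t-c)\<bar> \<le> eps L * (t-c)"
    if "r \<in> {a..s}" for r L
    using U(2)[OF that, of L] integral_unique[OF inner_int[OF t(1)]] by simp
  have e2: "(\<lambda>L. eps L * (t-c)) \<longlonglongrightarrow> 0" using eps_lim by (intro tendsto_mult_left_zero)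
  have gi2: "(\<lambda>r. HH L (r-a) (t-c)) integrable_on {a..s}" for L
    using outer_int[OF s(1)] by blast
  note U2 = unif_int[OF s(1) i2 e2 gi2]
  show "(\<lambda>r. integral {c..t} (\<lambda>w. UU (r-a) (w-c))) integrable_on {a..s}" by (rule U2(1))
  show "(\<lambda>L. W L (s-a) (t-c)) \<longlonglongrightarrow> integral {a..s} (\<lambda>r. integral {c..t} (\<lambda>w. UU (r-a) (w-c)))"
    using U2(3) integral_unique[OF outer_int[OF s(1)]] by simp
qed

lemma p_summable:
  assumes "0 \<le> x" "x \<le> \<Delta>"
  shows "summable (\<lambda>n. p n * x^n)" "summable (\<lambda>n. q n * x^n)"
proof -
  have b: "\<bar>P n * x^n\<bar> \<le> M * (inverse (fact n) * (G*\<bar>C\<bar>*\<Delta>^2)^n)"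
    if hP: "\<bar>P n\<bar> \<le> M * (G*\<bar>C\<bar>*\<Delta>)^n / (fact n)^2" for P :: "nat \<Rightarrow> real" and n
  proof -
    have "\<bar>P n * x^n\<bar> = \<bar>P n\<bar> * x^n" using assms by (simp add: abs_mult)
    also have "\<dots> \<le> (M * (G*\<bar>C\<bar>*\<Delta>)^n / (fact n)^2) * \<Delta>^n"
      using assms hP by (intro mult_mono power_mono) auto
    also have "\<dots> = M * (G*\<bar>C\<bar>*\<Delta>^2)^n / (fact n * fact n)"
      by (simp add: power2_eq_square power_mult_distrib)
    also have "\<dots> \<le> M * (G*\<bar>C\<bar>*\<Delta>^2)^n / fact n"
      using M G by (intro divide_left_mono) (auto simp: power2_eq_square)
    finally show ?thesis by (simp add: field_simps)
  qed
  have s: "summable (\<lambda>n. M * (inverse (fact n) * (G*\<bar>C\<bar>*\<Delta>^2)^n))"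
    by (intro summable_mult summable_exp)
  show "summable (\<lambda>n. p n * x^n)" by (rule abs_suminf_le(1)[OF s]) (rule b[OF hp])
  show "summable (\<lambda>n. q n * x^n)" by (rule abs_suminf_le(1)[OF s]) (rule b[OF hq])
qed

lemma uL_Suc:
  "uL (Suc L) x y = (\<Sum>n<Suc L. p n * x^n) + (\<Sum>n<Suc L. q n * y^n) - p 0 + C * W L x y"
proof -
  have "uL (Suc L) x y = tm p q C x y 0 0 + (\<Sum>n<L. tm p q C x y 0 (Suc n)) + (\<Sum>m<L. tm p q C x y (Suc m) 0)
     + (\<Sum>m<L. \<Sum>n<L. tm p q C x y (Suc m) (Suc n))"
    unfolding uL_def by (rule sq_split)
  moreover have "tm p q C x y 0 0 = p 0" by (simp add: tm_def cf_def)
  moreover have "tm p q C x y 0 (Suc n) = q (Suc n) * y^Suc n" for n by (simp add: tm_def cf_def)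
  moreover have "tm p q C x y (Suc m) 0 = p (Suc m) * x^Suc m" for m by (simp add: tm_def cf_def)
  moreover have "(\<Sum>m<L. \<Sum>n<L. tm p q C x y (Suc m) (Suc n)) = C * W L x y"
    unfolding W_def tm_def cf_rec sum_distrib_left
    by (intro sum.cong refl) (simp add: field_simps)
  ultimately show ?thesis
    unfolding sum.lessThan_Suc_shift by (simp add: p0 del: sum.lessThan_Suc)
qed

lemma UU_eq:
  assumes s: "a \<le> s" "s - a \<le> \<Delta>" and t: "c \<le> t" "t - c \<le> \<Delta>"
  shows "UU (s-a) (t-c) = (\<Sum>n. p n * (s-a)^n) + (\<Sum>n. q n * (t-c)^n) - p 0
           + C * integral {a..s} (\<lambda>r. integral {c..t} (\<lambda>w. UU (r-a) (w-c)))"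
proof -
  let ?x = "s - a" and ?y = "t - c"
  have xy: "0 \<le> ?x" "?x \<le> \<Delta>" "0 \<le> ?y" "?y \<le> \<Delta>" using s t by auto
  have l1: "(\<lambda>L. uL (Suc L) ?x ?y) \<longlonglongrightarrow> UU ?x ?y"
  proof -
    have "(\<lambda>L. uL L ?x ?y) \<longlonglongrightarrow> UU ?x ?y"
      unfolding uL_def sq_shell UU_def by (rule summable_LIMSEQ[OF summable_shell[OF xy]])
    then show ?thesis by (rule LIMSEQ_Suc)
  qed
  have l2: "(\<lambda>L. (\<Sum>n<Suc L. p n * ?x^n) + (\<Sum>n<Suc L. q n * ?y^n) - p 0 + C * W L ?x ?y)
     \<longlonglongrightarrow> (\<Sum>n. p n * ?x^n) + (\<Sum>n. q n * ?y^n) - p 0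
           + C * integral {a..s} (\<lambda>r. integral {c..t} (\<lambda>w. UU (r-a) (w-c)))"
    by (intro tendsto_intros LIMSEQ_Suc[OF summable_LIMSEQ] p_summable V_UU(3) s t xy)
  show ?thesis using LIMSEQ_unique[OF l1 l2[folded uL_Suc]] .
qed

end

lemma step_bound:
  fixes e :: "real \<Rightarrow> real \<Rightarrow> real"
  assumes s: "a \<le> s" and t: "c \<le> t" and E0: "E0 \<ge> 0"
    and ei: "\<And>r. r \<in> {a..s} \<Longrightarrow> e r integrable_on {c..t}"
    and Fi: "(\<lambda>r. integral {c..t} (e r)) integrable_on {a..s}"
    and hb: "\<And>r w. r \<in> {a..s} \<Longrightarrow> w \<in> {c..t} \<Longrightarrow> \<bar>e r w\<bar> \<le> E0 * (A*(r-a)*(w-c))^j/(fact j)^2"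
    and A: "A \<ge> 0"
  shows "\<bar>C * integral {a..s} (\<lambda>r. integral {c..t} (e r))\<bar> \<le> \<bar>C\<bar> * (E0 * A^j * (t-c)^Suc j * (s-a)^Suc j / ((fact j)^2 * real (Suc j) * real (Suc j)))"
proof -
  have inner: "\<bar>integral {c..t} (e r)\<bar> \<le> (E0 * A^j * (t-c)^Suc j / ((fact j)^2 * real (Suc j))) * (r-a)^j"
    if r: "r \<in> {a..s}" for r
  proof -
    have hi: "((\<lambda>w. (E0 * (A*(r-a))^j/(fact j)^2) * (w-c)^j) has_integral
        (E0 * (A*(r-a))^j/(fact j)^2) * ((t-c)^Suc j/Suc j)) {c..t}"
      by (intro has_integral_mult_right mono_int t)
    have "\<bar>integral {c..t} (e r)\<bar> \<le> integral {c..t} (\<lambda>w. (E0 * (A*(r-a))^j/(fact j)^2) * (w-c)^j)"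
    proof (rule integral_norm_bound_integral[of "e r", simplified])
      show "e r integrable_on {c..t}" using ei r .
      show "(\<lambda>w. (E0 * (A*(r-a))^j/(fact j)^2) * (w-c)^j) integrable_on {c..t}" using hi by blast
      fix w assume "w \<in> {c..t}"
      then show "\<bar>e r w\<bar> \<le> (E0 * (A*(r-a))^j/(fact j)^2) * (w-c)^j"
        using hb[OF r, of w] by (simp add: power_mult_distrib)
    qed
    also have "\<dots> = (E0 * (A*(r-a))^j/(fact j)^2) * ((t-c)^Suc j/Suc j)"
      by (rule integral_unique[OF hi])
    also have "\<dots> = (E0 * A^j * (t-c)^Suc j / ((fact j)^2 * real (Suc j))) * (r-a)^j"
    proof -
      have alg: "\<And>uu vv ff ss::real. E0 * (A^j * uu) / ff * (vv / ss) = (E0 * A^j * vv / (ff * ss)) * uu" by simp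
      show ?thesis unfolding power_mult_distrib by (rule alg)
    qed
    finally show ?thesis .
  qed
  have ho: "((\<lambda>r. (E0 * A^j * (t-c)^Suc j / ((fact j)^2 * real (Suc j))) * (r-a)^j) has_integral
     (E0 * A^j * (t-c)^Suc j / ((fact j)^2 * real (Suc j))) * ((s-a)^Suc j/Suc j)) {a..s}"
    by (intro has_integral_mult_right mono_int s)
  have "\<bar>integral {a..s} (\<lambda>r. integral {c..t} (e r))\<bar>
      \<le> integral {a..s} (\<lambda>r. (E0 * A^j * (t-c)^Suc j / ((fact j)^2 * real (Suc j))) * (r-a)^j)"
    using integral_norm_bound_integral[OF Fi, of "\<lambda>r. (E0 * A^j * (t-c)^Suc j / ((fact j)^2 * real (Suc j))) * (r-a)^j"]
      ho inner by auto
  also have "\<dots> = (E0 * A^j * (t-c)^Suc j / ((fact j)^2 * real (Suc j))) * ((s-a)^Suc j/Suc j)"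
    by (rule integral_unique[OF ho])
  also have "\<dots> = E0 * A^j * (t-c)^Suc j * (s-a)^Suc j / ((fact j)^2 * real (Suc j) * real (Suc j))"
    by simp
  finally have "\<bar>integral {a..s} (\<lambda>r. integral {c..t} (e r))\<bar> \<le> E0 * A^j * (t-c)^Suc j * (s-a)^Suc j / ((fact j)^2 * real (Suc j) * real (Suc j))" .
  then show ?thesis unfolding abs_mult by (rule mult_left_mono) simp
qed

lemma alg_step:
  fixes E0 A x y :: real
  shows "A * (E0 * A^j * y^Suc j * x^Suc j / ((fact j)^2 * real (Suc j) * real (Suc j)))
    = E0 * (A*x*y)^Suc j / (fact (Suc j))^2"
  by (simp add: power_mult_distrib power2_eq_square field_simps)

context gs begin

lemma unique:
  fixes a b c d :: real and k :: "real \<Rightarrow> real \<Rightarrow> real"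
  assumes ab: "a < b" and cd: "c < d" and bD: "b - a \<le> \<Delta>" and dD: "d - c \<le> \<Delta>"
    and gsol: "goursat_solution a b c d C k"
    and kc: "\<forall>s\<in>{a..b}. k s c = (\<Sum>n. p n * (s-a)^n)"
    and ka: "\<forall>t\<in>{c..d}. k a t = (\<Sum>n. q n * (t-c)^n)"
  shows "k b d = UU (b-a) (d-c)"
proof -
  define e where "e s t = k s t - UU (s-a) (t-c)" for s t
  have cont: "continuous_on ({a..b}\<times>{c..d}) (\<lambda>(s,t). k s t)"
    and eq: "\<And>s t. s\<in>{a..b} \<Longrightarrow> t\<in>{c..d} \<Longrightarrow> k s t = k s c + k a t - k a c
                + C * integral {a..s} (\<lambda>r. integral {c..t} (\<lambda>w. k r w))"
    using gsol unfolding goursat_solution_def by blast+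
  have kin: "(k r) integrable_on {c..t}" if "r\<in>{a..b}" "t\<in>{c..d}" for r t
  proof -
    have "continuous_on {c..t} (\<lambda>w. (\<lambda>(s,t). k s t) (r, w))"
      by (rule continuous_on_compose2[OF cont]) (use that in \<open>auto intro!: continuous_intros\<close>)
    then show ?thesis by (intro integrable_continuous_real) simp
  qed
  have kout: "(\<lambda>r. integral {c..t} (k r)) integrable_on {a..s}" if "s\<in>{a..b}" "t\<in>{c..d}" for s t
  proof -
    have "continuous_on ({a..b} \<times> cbox c t) (\<lambda>(x,w). k x w)"
      by (rule continuous_on_subset[OF cont]) (use that in auto)
    from integral_continuous_on_param[OF this]
    have "continuous_on {a..b} (\<lambda>x. integral {c..t} (k x))" by simp
    then have "continuous_on {a..s} (\<lambda>x. integral {c..t} (k x))"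
      by (rule continuous_on_subset) (use that in auto)
    then show ?thesis by (rule integrable_continuous_real)
  qed
  have dom: "s - a \<le> \<Delta>" "t - c \<le> \<Delta>" if "s\<in>{a..b}" "t\<in>{c..d}" for s t
    using that bD dD by auto
  have ein: "(e r) integrable_on {c..t}" if "s\<in>{a..b}" "t\<in>{c..d}" "r \<in> {a..s}" for s t r
  proof -
    have "(\<lambda>w. k r w - UU (r-a) (w-c)) integrable_on {c..t}"
      using kin[of r t] V_UU(1)[of a s c t r] that dom[OF that(1,2)] by (intro integrable_diff) auto
    then show ?thesis unfolding e_def .
  qed
  have Fe: "integral {c..t} (e r) = integral {c..t} (k r) - integral {c..t} (\<lambda>w. UU (r-a) (w-c))"
    if "s\<in>{a..b}" "t\<in>{c..d}" "r \<in> {a..s}" for s t r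
    unfolding e_def
    using kin[of r t] V_UU(1)[of a s c t r] that dom[OF that(1,2)] by (intro integral_diff) auto
  have eout: "(\<lambda>r. integral {c..t} (e r)) integrable_on {a..s}"
    and eint: "integral {a..s} (\<lambda>r. integral {c..t} (e r)) = integral {a..s} (\<lambda>r. integral {c..t} (k r))
        - integral {a..s} (\<lambda>r. integral {c..t} (\<lambda>w. UU (r-a) (w-c)))"
    if "s\<in>{a..b}" "t\<in>{c..d}" for s t
  proof -
    have i1: "(\<lambda>r. integral {c..t} (k r)) integrable_on {a..s}" by (rule kout[OF that])
    have i2: "(\<lambda>r. integral {c..t} (\<lambda>w. UU (r-a) (w-c))) integrable_on {a..s}"
      using V_UU(2)[of a s c t] that dom[OF that] by auto
    have "(\<lambda>r. integral {c..t} (k r) - integral {c..t} (\<lambda>w. UU (r-a) (w-c))) integrable_on {a..s}"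
      by (rule integrable_diff[OF i1 i2])
    then show "(\<lambda>r. integral {c..t} (e r)) integrable_on {a..s}"
      using Henstock_Kurzweil_Integration.integrable_cong[of "{a..s}" "\<lambda>r. integral {c..t} (e r)"] Fe[OF that]
      by (metis (no_types, lifting))
    have "integral {a..s} (\<lambda>r. integral {c..t} (e r)) = integral {a..s} (\<lambda>r. integral {c..t} (k r) - integral {c..t} (\<lambda>w. UU (r-a) (w-c)))"
      by (rule Henstock_Kurzweil_Integration.integral_cong) (rule Fe[OF that])
    also have "\<dots> = integral {a..s} (\<lambda>r. integral {c..t} (k r))
        - integral {a..s} (\<lambda>r. integral {c..t} (\<lambda>w. UU (r-a) (w-c)))"
      by (rule integral_diff[OF i1 i2])
    finally show "integral {a..s} (\<lambda>r. integral {c..t} (e r)) = integral {a..s} (\<lambda>r. integral {c..t} (k r))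
        - integral {a..s} (\<lambda>r. integral {c..t} (\<lambda>w. UU (r-a) (w-c)))" .
  qed
  have kac: "k a c = p 0"
  proof -
    have "k a c = (\<Sum>n. q n * 0^n)" using ka cd by simp
    then show ?thesis using p0 by simp
  qed
  have eeq: "e s t = C * integral {a..s} (\<lambda>r. integral {c..t} (e r))"
    if "s\<in>{a..b}" "t\<in>{c..d}" for s t
  proof -
    have u: "UU (s-a) (t-c) = (\<Sum>n. p n * (s-a)^n) + (\<Sum>n. q n * (t-c)^n) - p 0
           + C * integral {a..s} (\<lambda>r. integral {c..t} (\<lambda>w. UU (r-a) (w-c)))"
      using that dom[OF that] by (intro UU_eq) auto
    have "k s t = (\<Sum>n. p n * (s-a)^n) + (\<Sum>n. q n * (t-c)^n) - p 0
                + C * integral {a..s} (\<lambda>r. integral {c..t} (k r))"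
      using eq[OF that] kc ka that kac by simp
    then show ?thesis unfolding e_def eint[OF that] u by (simp add: algebra_simps)
  qed
  obtain Bk where Bk: "\<And>s t. s\<in>{a..b} \<Longrightarrow> t\<in>{c..d} \<Longrightarrow> \<bar>k s t\<bar> \<le> Bk"
  proof -
    have "compact ((\<lambda>(s,t). k s t) ` ({a..b}\<times>{c..d}))"
      by (rule compact_continuous_image[OF cont compact_Times]) auto
    then obtain B where "\<forall>x\<in>(\<lambda>(s,t). k s t) ` ({a..b}\<times>{c..d}). norm x \<le> B"
      using compact_imp_bounded bounded_iff by metis
    then show ?thesis using that[of B] by force
  qed
  define E0 where "E0 = max 0 Bk + (\<Sum>K. 2*M*tau K)"
  have E0: "E0 \<ge> 0" unfolding E0_def
    using suminf_nonneg[OF summable_2tau] M tau_nonneg by (simp add: add_nonneg_nonneg)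
  have ind: "\<forall>s\<in>{a..b}. \<forall>t\<in>{c..d}. \<bar>e s t\<bar> \<le> E0 * (\<bar>C\<bar>*(s-a)*(t-c))^j/(fact j)^2" for j
  proof (induction j)
    case 0
    show ?case
    proof (intro ballI)
      fix s t assume st: "s\<in>{a..b}" "t\<in>{c..d}"
      have "\<bar>UU (s-a) (t-c)\<bar> \<le> (\<Sum>K. 2*M*tau K)" using st dom[OF st] by (intro UU_bound) auto
      then show "\<bar>e s t\<bar> \<le> E0 * (\<bar>C\<bar>*(s-a)*(t-c))^0/(fact 0)^2"
        using Bk[OF st] unfolding e_def E0_def by simp
    qed
  next
    case (Suc j)
    show ?case
    proof (intro ballI)
      fix s t assume st: "s\<in>{a..b}" "t\<in>{c..d}"
      have "\<bar>C * integral {a..s} (\<lambda>r. integral {c..t} (e r))\<bar> \<le> \<bar>C\<bar> * (E0 * \<bar>C\<bar>^j * (t-c)^Suc j * (s-a)^Suc j / ((fact j)^2 * real (Suc j) * real (Suc j)))"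
      proof (rule step_bound)
        show "a \<le> s" "c \<le> t" using st by auto
        show "E0 \<ge> 0" by (rule E0)
        show "\<And>r. r \<in> {a..s} \<Longrightarrow> e r integrable_on {c..t}" using ein[OF st] .
        show "(\<lambda>r. integral {c..t} (e r)) integrable_on {a..s}" by (rule eout[OF st])
        show "\<bar>e r w\<bar> \<le> E0 * (\<bar>C\<bar>*(r-a)*(w-c))^j/(fact j)^2" if "r \<in> {a..s}" "w \<in> {c..t}" for r w
          using Suc.IH that st by auto
      qed simp
      then show "\<bar>e s t\<bar> \<le> E0 * (\<bar>C\<bar>*(s-a)*(t-c))^Suc j/(fact (Suc j))^2"
        using eeq[OF st] alg_step[of "\<bar>C\<bar>" E0 j "t-c" "s-a"] by (simp add: mult_ac)
    qed
  qed
  define z where "z = \<bar>C\<bar>*(b-a)*(d-c)"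
  have z: "z \<ge> 0" unfolding z_def using ab cd by simp
  have "summable (\<lambda>j. E0 * z^j/(fact j)^2)"
  proof (rule summable_comparison_test'[OF summable_mult[OF summable_exp[of z], of E0], of 0])
    fix n :: nat
    have "fact n * fact n \<ge> (fact n :: real)" by simp
    then have "z^n / (fact n)^2 \<le> z^n / fact n"
      using z by (intro divide_left_mono) (auto simp: power2_eq_square)
    then show "norm (E0 * z^n/(fact n)^2) \<le> E0 * (inverse (fact n) * z^n)"
      using E0 z by (simp add: field_simps mult_left_mono)
  qed
  then have "(\<lambda>j. E0 * z^j/(fact j)^2) \<longlonglongrightarrow> 0" by (rule summable_LIMSEQ_zero)
  moreover have "\<bar>e b d\<bar> \<le> E0 * z^j/(fact j)^2" for j
    using ind[of j] ab cd unfolding z_def by auto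
  ultimately have "\<bar>e b d\<bar> \<le> 0" by (intro LIMSEQ_le_const) auto
  then show ?thesis unfolding e_def by simp
qed

end

lemma sum_if_restrict:
  assumes "finite A" "A \<inter> {x. P x} = B"
  shows "(\<Sum>x\<in>A. if P x then f x else 0) = (\<Sum>x\<in>B. f x)"
proof -
  have "(\<Sum>x\<in>A. if P x then f x else 0) = (\<Sum>x\<in>A \<inter> {x. P x}. f x)"
    by (simp add: sum.inter_restrict[OF assms(1)])
  then show ?thesis using assms(2) by simp
qed

definition S1 :: "nat \<Rightarrow> nat \<Rightarrow> nat \<Rightarrow> bool" where
  "S1 N m n \<longleftrightarrow> (n \<le> m \<and> m \<le> N) \<or> (m \<le> N \<and> m < n \<and> n \<le> m + N)"

lemma T1_eq:
  "(\<Sum>n=0..N. p_hat p q C 0 y N n * x^n)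
   = (\<Sum>m<Suc (2*N). \<Sum>n<Suc (2*N). if S1 N m n then tm p q C x y m n else 0)"
proof -
  let ?f = "tm p q C x y"
  let ?R = "Suc (2*N)"
  have row: "(\<Sum>n<?R. if S1 N m n then ?f m n else 0)
     = (if m \<le> N then (\<Sum>i\<le>m. ?f m i) + (\<Sum>j=1..N. ?f m (m+j)) else 0)" for m
  proof (cases "m \<le> N")
    case True
    have "(\<Sum>n<?R. if S1 N m n then ?f m n else 0)
       = (\<Sum>n<?R. if n \<le> m then ?f m n else 0) + (\<Sum>n<?R. if m < n \<and> n \<le> m + N then ?f m n else 0)"
      unfolding sum.distrib[symmetric] by (intro sum.cong refl) (auto simp: S1_def True)
    also have "(\<Sum>n<?R. if n \<le> m then ?f m n else 0) = (\<Sum>i\<le>m. ?f m i)"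
      by (rule sum_if_restrict) (use True in auto)
    also have "(\<Sum>n<?R. if m < n \<and> n \<le> m + N then ?f m n else 0) = (\<Sum>n\<in>{1+m..N+m}. ?f m n)"
      by (rule sum_if_restrict) (use True in auto)
    also have "(\<Sum>n\<in>{1+m..N+m}. ?f m n) = (\<Sum>j=1..N. ?f m (m+j))"
      by (subst sum.shift_bounds_cl_nat_ivl) (simp add: add.commute)
    finally show ?thesis using True by simp
  next
    case False
    then show ?thesis by (auto simp: S1_def intro!: sum.neutral)
  qed
  have "(\<Sum>m<?R. \<Sum>n<?R. if S1 N m n then ?f m n else 0)
      = (\<Sum>m<?R. if m \<le> N then (\<Sum>i\<le>m. ?f m i) + (\<Sum>j=1..N. ?f m (m+j)) else 0)"
    unfolding row ..
  also have "\<dots> = (\<Sum>m\<in>{0..N}. (\<Sum>i\<le>m. ?f m i) + (\<Sum>j=1..N. ?f m (m+j)))"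
    by (rule sum_if_restrict) auto
  also have "\<dots> = (\<Sum>n=0..N. p_hat p q C 0 y N n * x^n)"
  proof (rule sum.cong[OF refl])
    fix m assume "m \<in> {0..N}"
    have a: "(\<Sum>j=0..m. p j * (C * (y - 0)) ^ (m - j) * fact j / (fact (m - j) * fact m)) * x^m
        = (\<Sum>i\<le>m. ?f m i)"
    proof -
      have "(\<Sum>j=0..m. p j * (C * (y - 0)) ^ (m - j) * fact j / (fact (m - j) * fact m)) * x^m
         = (\<Sum>j=0..m. p j * (C * y) ^ (m - j) * fact j / (fact (m - j) * fact m) * x^m)"
        by (simp add: sum_distrib_right)
      also have "\<dots> = (\<Sum>i=0..m. p (m - i) * (C * y) ^ (m - (m - i)) * fact (m - i) / (fact (m - (m - i)) * fact m) * x^m)"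
        by (subst sum.atLeastAtMost_rev) simp
      also have "\<dots> = (\<Sum>i\<le>m. ?f m i)"
        unfolding atLeast0AtMost
        by (intro sum.cong refl) (auto simp: tm_def cf_def power_mult_distrib field_simps)
      finally show ?thesis .
    qed
    have b: "(\<Sum>j=1..N. q j * C ^ m * (y - 0) ^ (m + j) * fact j / (fact (m + j) * fact m)) * x^m
        = (\<Sum>j=1..N. ?f m (m+j))"
      unfolding sum_distrib_right
      by (intro sum.cong refl) (auto simp: tm_def cf_def field_simps)
    show "(\<Sum>i\<le>m. ?f m i) + (\<Sum>j=1..N. ?f m (m+j)) = p_hat p q C 0 y N m * x^m"
      unfolding p_hat_def distrib_right a b ..
  qed
  finally show ?thesis by simp
qed

lemma shell_swap: "shell (\<lambda>m n. f n m) K = shell f K"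
  unfolding shell_def by (simp add: lessThan_Suc_atMost[symmetric])

lemma bessel_eq:
  assumes "Y \<ge> 0"
  shows "bessel_I0 (2 * sqrt Y * \<Delta>) = (\<Sum>j. (Y*\<Delta>^2)^j/(fact j)^2)"
proof -
  have "(2 * sqrt Y * \<Delta> / 2) ^ (2 * j) = (Y*\<Delta>^2)^j" for j
  proof -
    have "(2 * sqrt Y * \<Delta> / 2) ^ (2 * j) = ((sqrt Y * \<Delta>)^2)^j" by (simp add: power_mult)
    also have "(sqrt Y * \<Delta>)^2 = Y*\<Delta>^2" using assms by (simp add: power_mult_distrib)
    finally show ?thesis .
  qed
  then show ?thesis unfolding bessel_I0_def by simp
qed

lemma bessel_ge1:
  assumes "Y \<ge> 0"
  shows "(\<Sum>j. Y^j/(fact j)^2) \<ge> (1::real)"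
proof -
  have s: "summable (\<lambda>j. Y^j/(fact j)^2)"
  proof (rule summable_comparison_test'[OF summable_exp[of Y], of 0])
    fix n :: nat
    have "fact n * fact n \<ge> (fact n :: real)" by simp
    then have "Y^n / (fact n)^2 \<le> Y^n / fact n"
      using assms by (intro divide_left_mono) (auto simp: power2_eq_square)
    then show "norm (Y^n/(fact n)^2) \<le> inverse (fact n) * Y^n"
      using assms by (simp add: field_simps)
  qed
  have "(\<Sum>j<1. Y^j/(fact j)^2) \<le> (\<Sum>j. Y^j/(fact j)^2)"
    by (rule sum_le_suminf[OF s]) (use assms in auto)
  then show ?thesis by simp
qed

context gs begin

lemma tau_tail:
  "(\<Sum>K. tau (K + Suc N)) \<le> X^(Suc N) / (fact (Suc N))^2 * (\<Sum>K. tau K)"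
proof -
  have "(\<Sum>K. tau (K + Suc N)) \<le> (\<Sum>K. X^(Suc N) / (fact (Suc N))^2 * tau K)"
  proof (rule suminf_le)
    fix K
    have f: "fact K * fact (Suc N) \<le> (fact (K + Suc N) :: real)" by (rule fact_add_ge)
    have "(fact K * fact (Suc N))^2 \<le> (fact (K + Suc N) :: real)^2"
      using f by (intro power_mono) auto
    then have "X^(K + Suc N) / (fact (K + Suc N))^2 \<le> X^(K + Suc N) / (fact K * fact (Suc N))^2"
      using X_nonneg by (intro divide_left_mono) (auto intro!: mult_pos_pos)
    then show "tau (K + Suc N) \<le> X^(Suc N) / (fact (Suc N))^2 * tau K"
    proof -
      have g: "\<And>uu vv ff1 ff2::real. uu / ff1^2 * (vv / ff2^2) = (vv * uu) / (ff2 * ff1)^2"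
        by (simp add: power_mult_distrib mult.commute)
      show ?thesis unfolding tau_def g power_add[of X K "Suc N"] using \<open>X^(K + Suc N) / _ \<le> _\<close>
        by (simp only: power_add)
    qed
  next
    show "summable (\<lambda>K. tau (K + Suc N))" by (rule summable_ignore_initial_segment[OF summable_tau])
  next
    show "summable (\<lambda>K. X^(Suc N) / (fact (Suc N))^2 * tau K)" by (rule summable_mult[OF summable_tau])
  qed
  also have "\<dots> = X^(Suc N) / (fact (Suc N))^2 * (\<Sum>K. tau K)"
    by (rule suminf_mult[OF summable_tau])
  finally show ?thesis .
qed

lemma tm_swap: "tm p q C x y m n = tm q p C y x n m"
  unfolding tm_def cf_def using p0 by (auto simp: mult_ac)

end

lemma ph: "p_hat P Q C u v N n = p_hat P Q C 0 (v - u) N n" for P Q u v n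
    unfolding p_hat_def by (simp only: diff_zero)
lemma kh_eq: "k_hat p q C a b c d N = ((\<Sum>n=0..N. p_hat p q C 0 (d-c) N n * (b-a)^n) + (\<Sum>n=0..N. p_hat q p C 0 (b-a) N n * (d-c)^n)) / 2"
proof -
    have "k_hat p q C a b c d N = (1/2) * ((\<Sum>n=0..N. p_hat p q C 0 (d-c) N n * (b-a)^n) + (\<Sum>n=0..N. p_hat q p C 0 (b-a) N n * (d-c)^n))"
      unfolding k_hat_def sum.distrib ph[of p q C c d] ph[of q p C a b] by (rule refl)
    then show ?thesis by simp
qed

lemma avg_bound:
  fixes U T1 T2 E :: real
  assumes "\<bar>U - T1\<bar> \<le> E" "\<bar>U - T2\<bar> \<le> E"
  shows "\<bar>U - (T1 + T2) / 2\<bar> \<le> E"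
  using assms by (simp add: abs_le_iff field_simps)

lemma fin_alg:
  fixes X P1 P2 M I S F :: real
  assumes "X = P1 * P2"
  shows "2*M*(I*(X/F*S)) = 2*M*I*S*P1*P2/F"
  using assms by (simp add: mult_ac)

lemma le_mul1:
  fixes I Z :: real
  assumes "1 \<le> I" "0 \<le> Z"
  shows "Z \<le> I * Z"
  using mult_right_mono[OF assms] by simp

lemma abs_recover:
  fixes u F v :: real
  assumes "u > 0" "F > 0"
  shows "\<bar>v\<bar> = \<bar>F * v / u\<bar> * u / F"
  using assms by (simp add: abs_mult)

lemma le_recover:
  fixes X M Pv u F :: real
  assumes "X \<le> M" "Pv = X * u / F" "u > 0" "F > 0"
  shows "Pv \<le> M * u / F"
  using assms by (simp add: divide_right_mono mult_right_mono)

theorem mainTheorem5: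
  fixes a b c d C :: real and N \<gamma> :: nat
    and p q :: "nat \<Rightarrow> real" and k :: "real \<Rightarrow> real \<Rightarrow> real"
  defines "\<Delta> \<equiv> max (b - a) (d - c)"
  assumes "a < b" and "c < d" and "C \<noteq> 0" and "N \<ge> 2" and "\<gamma> \<ge> 1"
    and "p 0 = q 0"
    and "bdd_above (range (\<lambda>n. \<bar>(fact n) ^ 2 * p n / (real \<gamma> * \<bar>C\<bar> * \<Delta>) ^ n\<bar>))"
    and "bdd_above (range (\<lambda>n. \<bar>(fact n) ^ 2 * q n / (real \<gamma> * \<bar>C\<bar> * \<Delta>) ^ n\<bar>))"
    and "goursat_solution a b c d C k"
    and "\<forall>s\<in>{a..b}. k s c = (\<Sum>n. p n * (s - a) ^ n)"
    and "\<forall>t\<in>{c..d}. k a t = (\<Sum>n. q n * (t - c) ^ n)"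
  shows "\<bar>k b d - k_hat p q C a b c d N\<bar>
    \<le> 2 * gamma_norm p q \<gamma> C \<Delta>
        * bessel_I0 (2 * sqrt (real \<gamma> * \<bar>C\<bar>) * \<Delta>)
        * bessel_I0 (2 * sqrt ((real \<gamma> + 1) * \<bar>C\<bar>) * \<Delta>)
        * (\<bar>C\<bar> * \<Delta>^2) ^ (N + 1) * (real \<gamma> + 1) ^ (N + 1) / (fact (N + 1)) ^ 2"
proof -
  note ab = assms(2) and cd = assms(3) and C0 = assms(4) and g1 = assms(6) and p0 = assms(7)
    and bp = assms(8) and bq = assms(9) and gsol = assms(10) and kc = assms(11) and ka = assms(12)
  define M where "M = gamma_norm p q \<gamma> C \<Delta>"
  have Dpos: "\<Delta> > 0" unfolding \<Delta>_def using ab by simp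
  have bD: "b - a \<le> \<Delta>" and dD: "d - c \<le> \<Delta>" unfolding \<Delta>_def by auto
  have gpos: "real \<gamma> * \<bar>C\<bar> * \<Delta> > 0" using g1 C0 Dpos by simp
  have bnd: "\<bar>P n\<bar> \<le> M * (real \<gamma> * \<bar>C\<bar> * \<Delta>)^n / (fact n)^2"
    if bP: "bdd_above (range (\<lambda>n. \<bar>(fact n) ^ 2 * P n / (real \<gamma> * \<bar>C\<bar> * \<Delta>) ^ n\<bar>))"
    and MP: "(SUP n. \<bar>(fact n) ^ 2 * P n / (real \<gamma> * \<bar>C\<bar> * \<Delta>) ^ n\<bar>) \<le> M"
    for P :: "nat \<Rightarrow> real" and n
  proof -
    let ?g = "real \<gamma> * \<bar>C\<bar> * \<Delta>"
    have "\<bar>(fact n) ^ 2 * P n / ?g ^ n\<bar> \<le> M"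
      using cSUP_upper[OF UNIV_I bP, of n] MP by linarith
    moreover have "\<bar>P n\<bar> = \<bar>(fact n) ^ 2 * P n / ?g ^ n\<bar> * ?g^n / (fact n)^2"
      by (rule abs_recover) (use gpos in simp_all)
    ultimately show ?thesis
      by (rule le_recover) (use gpos in simp_all)
  qed
  have hp: "\<bar>p n\<bar> \<le> M * (real \<gamma> * \<bar>C\<bar> * \<Delta>)^n / (fact n)^2" for n
    by (rule bnd[OF bp]) (simp add: M_def gamma_norm_def)
  have hq: "\<bar>q n\<bar> \<le> M * (real \<gamma> * \<bar>C\<bar> * \<Delta>)^n / (fact n)^2" for n
    by (rule bnd[OF bq]) (simp add: M_def gamma_norm_def)
  have M0: "M \<ge> 0" using hp[of 0] by simp
  interpret A: gs p q C M "real \<gamma>" \<Delta>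
    by unfold_locales (use hp hq M0 Dpos p0 in auto)
  interpret B: gs q p C M "real \<gamma>" \<Delta>
    by unfold_locales (use hp hq M0 Dpos p0 in auto)
  have kbd: "k b d = A.UU (b-a) (d-c)"
    by (rule A.unique[OF ab cd bD dD gsol kc ka])
  have sym: "A.UU (b-a) (d-c) = B.UU (d-c) (b-a)"
  proof -
    have "tm p q C (b-a) (d-c) = (\<lambda>m n. tm q p C (d-c) (b-a) n m)"
      using A.tm_swap by (auto simp: fun_eq_iff)
    moreover have "shell (\<lambda>m n. tm q p C (d-c) (b-a) n m) = shell (tm q p C (d-c) (b-a))"
      by (rule ext) (rule shell_swap)
    ultimately show ?thesis unfolding A.UU_def B.UU_def by simp
  qed
  let ?T1 = "\<Sum>n=0..N. p_hat p q C 0 (d-c) N n * (b-a)^n"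
  let ?T2 = "\<Sum>n=0..N. p_hat q p C 0 (b-a) N n * (d-c)^n"
  have SR: "\<And>m n. S1 N m n \<Longrightarrow> m < Suc (2*N) \<and> n < Suc (2*N)" unfolding S1_def by auto
  have SN: "\<And>m n. m \<le> N \<Longrightarrow> n \<le> N \<Longrightarrow> S1 N m n" unfolding S1_def by auto
  have E1: "\<bar>A.UU (b-a) (d-c) - ?T1\<bar> \<le> 2*M*(\<Sum>K. A.tau (K + Suc N))"
    unfolding T1_eq by (rule A.tail[OF _ bD _ dD SR SN]) (use ab cd in auto)
  have E2: "\<bar>B.UU (d-c) (b-a) - ?T2\<bar> \<le> 2*M*(\<Sum>K. B.tau (K + Suc N))"
    unfolding T1_eq by (rule B.tail[OF _ dD _ bD SR SN]) (use ab cd in auto)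
  have kh: "k_hat p q C a b c d N = (?T1 + ?T2) / 2"
    by (rule kh_eq)
  have main: "\<bar>k b d - k_hat p q C a b c d N\<bar> \<le> 2*M*(\<Sum>K. A.tau (K + Suc N))"
    unfolding kh kbd by (rule avg_bound[OF E1 E2[unfolded sym[symmetric]]])
  have I2: "bessel_I0 (2 * sqrt ((real \<gamma> + 1) * \<bar>C\<bar>) * \<Delta>) = (\<Sum>K. A.tau K)"
    by (subst bessel_eq) (simp_all add: A.tau_def[abs_def] A.X_def)
  have I1: "bessel_I0 (2 * sqrt (real \<gamma> * \<bar>C\<bar>) * \<Delta>) \<ge> 1"
    by (subst bessel_eq) (auto intro!: bessel_ge1)
  have I2nn: "(\<Sum>K. A.tau K) \<ge> 0" by (rule suminf_nonneg[OF A.summable_tau A.tau_nonneg])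
  have XX: "A.X^(Suc N) = (\<bar>C\<bar> * \<Delta>^2) ^ (N + 1) * (real \<gamma> + 1) ^ (N + 1)"
    unfolding A.X_def by (simp add: power_mult_distrib mult_ac)
  let ?Q = "A.X^(Suc N) / (fact (Suc N))^2"
  have Qnn: "?Q \<ge> 0" using A.X_nonneg by simp
  have "\<bar>k b d - k_hat p q C a b c d N\<bar> \<le> 2*M*(?Q * (\<Sum>K. A.tau K))"
  proof -
    have "2*M*(\<Sum>K. A.tau (K + Suc N)) \<le> 2*M*(?Q * (\<Sum>K. A.tau K))"
      by (rule mult_left_mono[OF A.tau_tail]) (use M0 in simp)
    then show ?thesis using main by (rule order_trans[rotated])
  qed
  also have "\<dots> \<le> 2*M*(bessel_I0 (2 * sqrt (real \<gamma> * \<bar>C\<bar>) * \<Delta>) * (?Q * (\<Sum>K. A.tau K)))"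
    by (rule mult_left_mono[OF le_mul1[OF I1 mult_nonneg_nonneg[OF Qnn I2nn]]]) (use M0 in simp)
  also have "\<dots> = 2 * gamma_norm p q \<gamma> C \<Delta>
        * bessel_I0 (2 * sqrt (real \<gamma> * \<bar>C\<bar>) * \<Delta>)
        * bessel_I0 (2 * sqrt ((real \<gamma> + 1) * \<bar>C\<bar>) * \<Delta>)
        * (\<bar>C\<bar> * \<Delta>^2) ^ (N + 1) * (real \<gamma> + 1) ^ (N + 1) / (fact (N + 1)) ^ 2"
    unfolding I2 M_def Suc_eq_plus1 by (rule fin_alg[OF XX[unfolded Suc_eq_plus1]])
  finally show ?thesis .
qed

end
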